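(* Every extreme point of the elliptope $\mathcal{E}_n$ is an extreme point of $\mathrm{Cor}(n,n)$.
   Context: $\mathcal{E}_n:=\{X\in\mathcal{S}^n_+: X_{ii}=1\ \forall i\in[n]\}$, where $\mathcal{S}^n_+$ is the set of real symmetric positive semidefinite $n\times n$ matrices. $\mathrm{Cor}(n,n)$ is the convex set of matrices $C=(c_{xy})\in[-1,1]^{n\times n}$ for which there exist $d\ge1$, Hermitian $d\times d$ matrices $M_1,\dots,M_n,N_1,\dots,N_n$ with eigenvalues in $[-1,1]$ and a Hermitian psd trace-one matrix $\rho$ on $\mathbb{C}^d\otimes\mathbb{C}^d$ with $c_{xy}=\mathrm{Tr}((M_x\otimes N_y)\rho)$ for all $x,y$; equivalently (Tsirelson), $C\in\mathrm{Cor}(n,n)$ iff there are unit vectors $u_x,v_y\in\mathbb{R}^{2n}$ with $c_{xy}=\langle u_x,v_y\rangle$. *)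

theory Defs
  imports "HOL-Analysis.Analysis"
begin

text \<open>Real n x n matrices are rendered as real^'n^'n with a finite index type 'n
  (so n = CARD('n)). Complex d x d matrices (d a natural number that is existentially
  quantified) are rendered as functions nat => nat => complex, only entries with
  indices < d being relevant. The space C^d tensor C^d is identified with C^(d*d)
  via the index (i,j) |-> i*d + j.\<close>

definition elliptope :: "(real^'n^'n) set" where
  "elliptope = {X. transpose X = X \<and> (\<forall>v. 0 \<le> v \<bullet> (X *v v)) \<and> (\<forall>i. X $ i $ i = 1)}"

definition hermitian_mat :: "nat \<Rightarrow> (nat \<Rightarrow> nat \<Rightarrow> complex) \<Rightarrow> bool" where
  "hermitian_mat d M \<longleftrightarrow> (\<forall>i<d. \<forall>j<d. M i j = cnj (M j i))"

definition is_eigenvalue :: "nat \<Rightarrow> (nat \<Rightarrow> nat \<Rightarrow> complex) \<Rightarrow> complex \<Rightarrow> bool" where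
  "is_eigenvalue d M ev \<longleftrightarrow>
     (\<exists>v :: nat \<Rightarrow> complex. (\<exists>i<d. v i \<noteq> 0) \<and> (\<forall>i<d. (\<Sum>j<d. M i j * v j) = ev * v i))"

definition psd_mat :: "nat \<Rightarrow> (nat \<Rightarrow> nat \<Rightarrow> complex) \<Rightarrow> bool" where
  "psd_mat d R \<longleftrightarrow> hermitian_mat d R \<and>
     (\<forall>v :: nat \<Rightarrow> complex. let q = (\<Sum>i<d. \<Sum>j<d. cnj (v i) * R i j * v j) in q \<in> \<real> \<and> 0 \<le> Re q)"

definition trace_mat :: "nat \<Rightarrow> (nat \<Rightarrow> nat \<Rightarrow> complex) \<Rightarrow> complex" where
  "trace_mat d R = (\<Sum>i<d. R i i)"

definition kron :: "nat \<Rightarrow> (nat \<Rightarrow> nat \<Rightarrow> complex) \<Rightarrow> (nat \<Rightarrow> nat \<Rightarrow> complex) \<Rightarrow> (nat \<Rightarrow> nat \<Rightarrow> complex)" where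
  "kron d A B = (\<lambda>i j. A (i div d) (j div d) * B (i mod d) (j mod d))"

definition mat_mult :: "nat \<Rightarrow> (nat \<Rightarrow> nat \<Rightarrow> complex) \<Rightarrow> (nat \<Rightarrow> nat \<Rightarrow> complex) \<Rightarrow> (nat \<Rightarrow> nat \<Rightarrow> complex)" where
  "mat_mult d A B = (\<lambda>i k. \<Sum>j<d. A i j * B j k)"

definition observable :: "nat \<Rightarrow> (nat \<Rightarrow> nat \<Rightarrow> complex) \<Rightarrow> bool" where
  "observable d M \<longleftrightarrow> hermitian_mat d M \<and>
     (\<forall>ev. is_eigenvalue d M ev \<longrightarrow> ev \<in> \<real> \<and> -1 \<le> Re ev \<and> Re ev \<le> 1)"

definition Cor :: "(real^'n^'n) set" where
  "Cor = {C. (\<forall>x y. -1 \<le> C $ x $ y \<and> C $ x $ y \<le> 1) \<and>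
     (\<exists>(d::nat) (M :: 'n \<Rightarrow> nat \<Rightarrow> nat \<Rightarrow> complex) (N :: 'n \<Rightarrow> nat \<Rightarrow> nat \<Rightarrow> complex)
        (\<rho> :: nat \<Rightarrow> nat \<Rightarrow> complex).
        d \<ge> 1 \<and> (\<forall>x. observable d (M x)) \<and> (\<forall>y. observable d (N y)) \<and>
        psd_mat (d*d) \<rho> \<and> trace_mat (d*d) \<rho> = 1 \<and>
        (\<forall>x y. complex_of_real (C $ x $ y) = trace_mat (d*d) (mat_mult (d*d) (kron d (M x) (N y)) \<rho>)))}"

end

theory Submission
  imports Defs "Jordan_Normal_Form.Spectral_Radius" "HOL-Real_Asymp.Real_Asymp"
begin

definition mvec :: "nat \<Rightarrow> (nat \<Rightarrow> nat \<Rightarrow> complex) \<Rightarrow> (nat \<Rightarrow> complex) \<Rightarrow> nat \<Rightarrow> complex" where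
  "mvec d M w = (\<lambda>i. \<Sum>j<d. M i j * w j)"
definition ipc :: "nat \<Rightarrow> (nat \<Rightarrow> complex) \<Rightarrow> (nat \<Rightarrow> complex) \<Rightarrow> complex" where
  "ipc d w z = (\<Sum>i<d. cnj (w i) * z i)"
definition nrm :: "nat \<Rightarrow> (nat \<Rightarrow> complex) \<Rightarrow> real" where
  "nrm d w = (\<Sum>i<d. (cmod (w i))^2)"

lemma ipc_self: "ipc d w w = complex_of_real (nrm d w)"
proof -
  have "cnj z * z = complex_of_real ((cmod z)^2)" for z
    by (metis complex_norm_square mult.commute of_real_power)
  then show ?thesis unfolding ipc_def nrm_def of_real_sum by simp
qed

lemma nrm_nonneg: "0 \<le> nrm d w"
  unfolding nrm_def by (simp add: sum_nonneg)

lemma ipc_cs: "(cmod (ipc d w z))^2 \<le> nrm d w * nrm d z"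
proof -
  have "cmod (ipc d w z) \<le> (\<Sum>i<d. cmod (w i) * cmod (z i))"
    unfolding ipc_def by (rule order_trans[OF norm_sum]) (simp add: norm_mult)
  then have "(cmod (ipc d w z))^2 \<le> (\<Sum>i<d. cmod (w i) * cmod (z i))^2"
    by (simp add: power_mono)
  also have "\<dots> \<le> nrm d w * nrm d z" unfolding nrm_def by (rule Cauchy_Schwarz_ineq_sum)
  finally show ?thesis .
qed

lemma herm_adj: assumes "hermitian_mat d M"
  shows "ipc d (mvec d M w) z = ipc d w (mvec d M z)"
proof -
  have c: "cnj (M i j) = M j i" if "i < d" "j < d" for i j
    using assms that unfolding hermitian_mat_def by (metis complex_cnj_cnj)
  have "ipc d (mvec d M w) z = (\<Sum>i<d. \<Sum>j<d. cnj (w j) * (M j i * z i))"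
    unfolding ipc_def mvec_def
    by (auto simp: sum_distrib_right c intro!: sum.cong)
  also have "\<dots> = (\<Sum>j<d. \<Sum>i<d. cnj (w j) * (M j i * z i))" by (rule sum.swap)
  also have "\<dots> = ipc d w (mvec d M z)" unfolding ipc_def mvec_def by (simp add: sum_distrib_left)
  finally show ?thesis .
qed

lemma herm_adj_pow: assumes "hermitian_mat d M"
  shows "ipc d ((mvec d M ^^ n) w) z = ipc d w ((mvec d M ^^ n) z)"
proof (induction n arbitrary: w z)
  case 0 then show ?case by simp
next
  case (Suc n)
  have "ipc d ((mvec d M ^^ Suc n) w) z = ipc d ((mvec d M ^^ n) (mvec d M w)) z"
    by (simp add: funpow_Suc_right del: funpow.simps)
  also have "\<dots> = ipc d (mvec d M w) ((mvec d M ^^ n) z)" by (rule Suc)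
  also have "\<dots> = ipc d w (mvec d M ((mvec d M ^^ n) z))" by (rule herm_adj[OF assms])
  also have "\<dots> = ipc d w ((mvec d M ^^ Suc n) z)" by simp
  finally show ?case .
qed

lemma jnf_vec_iter:
  fixes M :: "nat \<Rightarrow> nat \<Rightarrow> complex" and d :: nat
  defines "A \<equiv> Matrix.mat d d (\<lambda>(i,j). M i j)"
  shows "Matrix.vec d ((mvec d M ^^ k) w) = (A ^\<^sub>m k) *\<^sub>v Matrix.vec d w"
proof (induction k arbitrary: w)
  case 0
  have "A ^\<^sub>m 0 = 1\<^sub>m d" unfolding A_def by simp
  then show ?case by simp
next
  case (Suc k)
  have AC: "A \<in> carrier_mat d d" unfolding A_def by simp
  have one: "Matrix.vec d (mvec d M w) = A *\<^sub>v Matrix.vec d w" for w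
    by (rule eq_vecI) (auto simp: A_def mvec_def scalar_prod_def Matrix.row_def atLeast0LessThan)
  have "Matrix.vec d ((mvec d M ^^ Suc k) w) = Matrix.vec d ((mvec d M ^^ k) (mvec d M w))"
    by (simp add: funpow_Suc_right del: funpow.simps)
  also have "\<dots> = (A ^\<^sub>m k) *\<^sub>v (A *\<^sub>v Matrix.vec d w)" by (simp add: Suc one)
  also have "\<dots> = (A ^\<^sub>m k * A) *\<^sub>v Matrix.vec d w"
    by (rule assoc_mult_mat_vec[symmetric, OF pow_carrier_mat[OF AC] AC]) simp
  finally show ?case by simp
qed

lemma obs_spectral:
  assumes obs: "observable d M" and d: "d \<ge> 1"
  defines "A \<equiv> Matrix.mat d d (\<lambda>(i,j). M i j)"
  shows "spectral_radius A \<le> 1"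
proof -
  have AC: "A \<in> carrier_mat d d" unfolding A_def by simp
  have le: "cmod ev \<le> 1" if ev: "ev \<in> spectrum A" for ev
  proof -
    from ev obtain v where v: "v \<in> carrier_vec d" "v \<noteq> 0\<^sub>v d" "A *\<^sub>v v = ev \<cdot>\<^sub>v v"
      unfolding spectrum_def eigenvalue_def eigenvector_def A_def by auto
    have "\<exists>i<d. v $ i \<noteq> 0"
    proof (rule ccontr)
      assume "\<not> ?thesis"
      then have "v = 0\<^sub>v d" using v(1) by (intro eq_vecI) auto
      with v(2) show False by simp
    qed
    moreover have "(\<Sum>j<d. M i j * v $ j) = ev * v $ i" if "i < d" for i
    proof -
      have "(A *\<^sub>v v) $ i = ev * v $ i" using v(3) v(1) that by simp
      moreover have "(A *\<^sub>v v) $ i = (\<Sum>j<d. M i j * v $ j)"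
        using that v(1) by (simp add: A_def scalar_prod_def Matrix.row_def atLeast0LessThan)
      ultimately show ?thesis by simp
    qed
    ultimately have "is_eigenvalue d M ev" unfolding is_eigenvalue_def
      by (intro exI[of _ "\<lambda>i. v $ i"]) auto
    with obs have "ev \<in> \<real>" "-1 \<le> Re ev" "Re ev \<le> 1" unfolding observable_def by auto
    then show ?thesis by (auto elim!: Reals_cases)
  qed
  have fin: "finite (spectrum A)" by (rule card_finite_spectrum(1)[OF AC])
  have ne: "spectrum A \<noteq> {}" by (rule spectrum_non_empty[OF AC]) (use d in auto)
  show ?thesis unfolding spectral_radius_def using fin ne le by (subst Max_le_iff) auto
qed

lemma obs_poly_bound:
  assumes obs: "observable d M" and d: "d \<ge> 1"
  shows "\<exists>c1 c2. \<forall>k. \<forall>i<d. \<forall>j<d. cmod ((Matrix.mat d d (\<lambda>(i,j). M i j) ^\<^sub>m k) $$ (i,j)) \<le> c1 + c2 * real k ^ (d - 1)"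
proof -
  define A where "A = Matrix.mat d d (\<lambda>(i,j). M i j)"
  have AC: "A \<in> carrier_mat d d" unfolding A_def by simp
  have sr: "spectral_radius A \<le> 1" unfolding A_def by (rule obs_spectral[OF obs d])
  have "order ev (char_poly A) \<le> d" for ev
  proof -
    have "char_poly A \<noteq> 0" using degree_monic_char_poly[OF AC] by auto
    then have "order ev (char_poly A) \<le> degree (char_poly A)" by (rule order_degree)
    then show ?thesis using degree_monic_char_poly[OF AC] by simp
  qed
  from spectral_radius_poly_bound[OF AC sr this]
  obtain c1 c2 where "\<forall>k. norm_bound (A ^\<^sub>m k) (c1 + c2 * real k ^ (d - 1))" by blast
  then show ?thesis unfolding norm_bound_def A_def
    using pow_carrier_mat[OF AC] unfolding A_def by (metis carrier_matD)
qed

lemma iter_bound: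
  assumes obs: "observable d M" and d: "d \<ge> 1"
  shows "\<exists>K c1 c2. \<forall>k. nrm d ((mvec d M ^^ k) u) \<le> K * (c1 + c2 * real k ^ (d - 1))^2"
proof -
  define A where "A = Matrix.mat d d (\<lambda>(i,j). M i j)"
  have AC: "A \<in> carrier_mat d d" unfolding A_def by simp
  from obs_poly_bound[OF obs d] obtain c1 c2 where
    cb: "\<And>k i j. i < d \<Longrightarrow> j < d \<Longrightarrow> cmod ((A ^\<^sub>m k) $$ (i,j)) \<le> c1 + c2 * real k ^ (d - 1)"
    unfolding A_def by blast
  define S where "S = (\<Sum>j<d. cmod (u j))"
  have S0: "0 \<le> S" unfolding S_def by (simp add: sum_nonneg)
  show ?thesis
  proof (intro exI allI)
    fix k
    define B where "B = c1 + c2 * real k ^ (d - 1)"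
    have B0: "0 \<le> B" using cb[of 0 0 k] d norm_ge_zero[of "(A ^\<^sub>m k) $$ (0,0)"] unfolding B_def by linarith
    have ent: "cmod ((mvec d M ^^ k) u i) \<le> B * S" if i: "i < d" for i
    proof -
      have "(mvec d M ^^ k) u i = Matrix.vec d ((mvec d M ^^ k) u) $ i" using i by simp
      also have "\<dots> = ((A ^\<^sub>m k) *\<^sub>v Matrix.vec d u) $ i" unfolding A_def by (simp only: jnf_vec_iter)
      also have "\<dots> = (\<Sum>j<d. (A ^\<^sub>m k) $$ (i,j) * u j)"
        using i carrier_matD[OF pow_carrier_mat[OF AC, of k]]
        by (auto simp: scalar_prod_def Matrix.row_def atLeast0LessThan intro!: sum.cong)
      finally have "cmod ((mvec d M ^^ k) u i) \<le> (\<Sum>j<d. cmod ((A ^\<^sub>m k) $$ (i,j)) * cmod (u j))"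
        by (metis (no_types, lifting) norm_mult norm_sum sum.cong)
      also have "\<dots> \<le> (\<Sum>j<d. B * cmod (u j))"
        by (intro sum_mono mult_right_mono) (use cb i in \<open>auto simp: B_def\<close>)
      finally show ?thesis by (simp add: S_def sum_distrib_left)
    qed
    have "nrm d ((mvec d M ^^ k) u) \<le> (\<Sum>i<d. (B * S)^2)"
      unfolding nrm_def by (intro sum_mono power_mono ent) auto
    also have "\<dots> = real d * S^2 * B^2" by (simp add: power_mult_distrib)
    finally show "nrm d ((mvec d M ^^ k) u) \<le> real d * S^2 * (c1 + c2 * real k ^ (d - 1))^2"
      by (simp add: B_def)
  qed
qed

lemma growth_contra:
  fixes q K' :: real and m :: nat
  assumes q: "q > 1" and K: "K' \<ge> 0" and H: "\<And>j. q ^ (2^j) \<le> K' * real (2^j) ^ m"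
  shows False
proof -
  have lim: "((\<lambda>x. x ^ m / q powr x) \<longlongrightarrow> 0) at_top" using q by real_asymp
  have "eventually (\<lambda>x. x ^ m / q powr x < 1 / (K' + 1)) at_top"
    by (rule order_tendstoD(2)[OF lim]) (use K in simp)
  then obtain x0 where x0: "\<And>x. x \<ge> x0 \<Longrightarrow> x ^ m / q powr x < 1 / (K' + 1)"
    by (auto simp: eventually_at_top_linorder)
  define j where "j = nat \<lceil>x0\<rceil>"
  have "x0 \<le> real j" unfolding j_def by linarith
  also have "real j \<le> real ((2::nat)^j)" by (simp add: less_imp_le)
  finally have "real ((2::nat)^j) ^ m / q powr real ((2::nat)^j) < 1 / (K' + 1)" by (rule x0)
  moreover have "q powr real ((2::nat)^j) = q ^ (2^j)" by (rule powr_realpow) (use q in simp)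
  ultimately have lt: "real ((2::nat)^j) ^ m / q ^ (2^j) < 1 / (K' + 1)" by simp
  have qp: "q ^ (2^j) > 0" using q by simp
  from lt qp K have "real ((2::nat)^j) ^ m * (K' + 1) < q ^ (2^j)"
    by (simp add: field_simps)
  moreover have "q ^ (2^j) \<le> K' * real ((2::nat)^j) ^ m" using H[of j] by simp
  ultimately show False using K
    by (smt (verit, ccfv_SIG) distrib_left mult.commute mult_cancel_right1 zero_le_power of_nat_0_le_iff)
qed

lemma obs_contraction:
  assumes obs: "observable d M" and d: "d \<ge> 1"
  shows "nrm d (mvec d M u) \<le> nrm d u"
proof (rule ccontr)
  assume "\<not> ?thesis"
  then have gt: "nrm d (mvec d M u) > nrm d u" by simp
  have herm: "hermitian_mat d M" using obs unfolding observable_def by simp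
  define f where "f = mvec d M"
  define a where "a k = nrm d ((f ^^ k) u)" for k
  have a0: "a k \<ge> 0" for k unfolding a_def by (rule nrm_nonneg)
  have a_0: "a 0 = nrm d u" and a_1: "a 1 = nrm d (mvec d M u)" unfolding a_def f_def by simp_all
  have key1: "(a n)^2 \<le> a 0 * a (2*n)" for n
  proof -
    have "ipc d ((f^^n) u) ((f^^n) u) = ipc d u ((f^^n) ((f^^n) u))"
      unfolding f_def by (rule herm_adj_pow[OF herm])
    also have "\<dots> = ipc d u ((f^^(2*n)) u)" by (simp add: funpow_add mult_2)
    finally have "complex_of_real (a n) = ipc d u ((f^^(2*n)) u)" unfolding a_def by (simp add: ipc_self)
    then have "a n = cmod (ipc d u ((f^^(2*n)) u))" using a0[of n] by (metis norm_of_real abs_of_nonneg)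
    then show ?thesis using ipc_cs[of d u "(f^^(2*n)) u"] unfolding a_def by simp
  qed
  have key2: "(a 1) ^ (2^j) \<le> a (2^j) * (a 0) ^ (2^j - 1)" for j
  proof (induction j)
    case 0 then show ?case by simp
  next
    case (Suc j)
    have "(a 1) ^ (2^Suc j) = ((a 1) ^ (2^j))^2" by (simp add: power_mult[symmetric] mult.commute)
    also have "\<dots> \<le> (a (2^j) * (a 0) ^ (2^j - 1))^2"
      by (rule power_mono[OF Suc]) (simp add: a0)
    also have "\<dots> = (a (2^j))^2 * (a 0) ^ (2 * (2^j - 1))"
      by (simp add: power_mult_distrib power_mult[symmetric] mult.commute)
    also have "\<dots> \<le> (a 0 * a (2 * 2^j)) * (a 0) ^ (2 * (2^j - 1))"
      by (rule mult_right_mono[OF key1]) (simp add: a0)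
    also have "\<dots> = a (2^Suc j) * (a 0) ^ (2^Suc j - 1)"
    proof -
      have e: "2^Suc j - 1 = Suc (2 * (2^j - 1))"
      proof -
        have "(1::nat) \<le> 2^j" by simp
        then show ?thesis by (simp only: power_Suc)
      qed
      show ?thesis unfolding e by simp
    qed
    finally show ?case .
  qed
  from iter_bound[OF obs d, of u] obtain K c1 c2 where
    bd: "\<And>k. a k \<le> K * (c1 + c2 * real k ^ (d - 1))^2" unfolding a_def f_def by blast
  have apos: "a 0 > 0"
  proof (rule ccontr)
    assume "\<not> a 0 > 0"
    then have "a 0 = 0" using a0[of 0] by simp
    then have "\<forall>i<d. u i = 0" unfolding a_def nrm_def by (simp add: sum_nonneg_eq_0_iff)
    then have "mvec d M u i = 0" for i unfolding mvec_def by simp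
    then have "a 1 = 0" unfolding a_def f_def nrm_def by simp
    with gt a_0 a_1 \<open>a 0 = 0\<close> show False by simp
  qed
  define q where "q = a 1 / a 0"
  have q1: "q > 1" using gt apos unfolding q_def a_0[symmetric] a_1[symmetric] by simp
  define K' where "K' = \<bar>K\<bar> * (\<bar>c1\<bar> + \<bar>c2\<bar>)^2 / a 0"
  have K'0: "K' \<ge> 0" unfolding K'_def using apos by simp
  show False
  proof (rule growth_contra[OF q1 K'0, of "2 * (d - 1)"])
    fix j :: nat
    define N where "N = real ((2::nat)^j)"
    have N1: "N \<ge> 1" unfolding N_def by simp
    have "q ^ (2^j) = (a 1)^(2^j) / (a 0)^(2^j)" unfolding q_def by (simp add: power_divide)
    also have "\<dots> \<le> a (2^j) * (a 0) ^ (2^j - 1) / (a 0)^(2^j)"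
      by (rule divide_right_mono[OF key2]) (simp add: a0)
    also have "\<dots> = a (2^j) / a 0"
    proof -
      have "(a 0)^(2^j) = a 0 * (a 0)^(2^j - 1)"
        using power_Suc[of "a 0" "2^j - 1"] by simp
      then show ?thesis using apos by simp
    qed
    also have "\<dots> \<le> K * (c1 + c2 * N ^ (d - 1))^2 / a 0"
      by (rule divide_right_mono) (use bd[of "2^j"] apos in \<open>simp_all add: N_def\<close>)
    also have "\<dots> \<le> K' * N ^ (2 * (d - 1))"
    proof -
      have "\<bar>c1 + c2 * N ^ (d - 1)\<bar> \<le> (\<bar>c1\<bar> + \<bar>c2\<bar>) * N ^ (d - 1)"
      proof -
        have "1 \<le> N ^ (d - 1)" using N1 by simp
        then have "\<bar>c1\<bar> \<le> \<bar>c1\<bar> * N ^ (d - 1)" by (simp add: mult_le_cancel_left1)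
        moreover have "\<bar>c2 * N ^ (d - 1)\<bar> = \<bar>c2\<bar> * N ^ (d - 1)" using N1 by (simp add: abs_mult)
        ultimately show ?thesis by (smt (verit) abs_triangle_ineq distrib_right)
      qed
      then have "(c1 + c2 * N ^ (d - 1))^2 \<le> ((\<bar>c1\<bar> + \<bar>c2\<bar>) * N ^ (d - 1))^2"
        by (metis abs_ge_zero power2_abs power_mono)
      then have "K * (c1 + c2 * N ^ (d - 1))^2 \<le> \<bar>K\<bar> * ((\<bar>c1\<bar> + \<bar>c2\<bar>) * N ^ (d - 1))^2"
      proof -
        have "K * (c1 + c2 * N ^ (d - 1))^2 \<le> \<bar>K\<bar> * (c1 + c2 * N ^ (d - 1))^2"
          by (rule mult_right_mono) simp_all
        also have "\<dots> \<le> \<bar>K\<bar> * ((\<bar>c1\<bar> + \<bar>c2\<bar>) * N ^ (d - 1))^2"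
          by (rule mult_left_mono) (fact, simp)
        finally show ?thesis .
      qed
      moreover have "\<bar>K\<bar> * ((\<bar>c1\<bar> + \<bar>c2\<bar>) * N ^ (d - 1))^2 / a 0 = K' * N ^ (2 * (d - 1))"
      proof -
        have "N ^ (2 * (d - 1)) = (N ^ (d - 1))^2" by (simp add: power_mult[symmetric] mult.commute)
        then show ?thesis unfolding K'_def by (simp add: power_mult_distrib)
      qed
      ultimately show ?thesis using apos by (metis divide_right_mono less_imp_le)
    qed
    finally have "q ^ (2^j) \<le> K' * N ^ (2 * (d - 1))" .
    then show "q ^ (2^j) \<le> K' * real (2^j) ^ (2 * (d - 1))" by (simp add: N_def)
  qed
qed


no_notation Matrix.vec_index (infixl "$" 100)

definition bf :: "'i set \<Rightarrow> ('i \<Rightarrow> 'i \<Rightarrow> complex) \<Rightarrow> ('i \<Rightarrow> complex) \<Rightarrow> ('i \<Rightarrow> complex) \<Rightarrow> complex" where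
  "bf S R u w = (\<Sum>i\<in>S. \<Sum>j\<in>S. cnj (u i) * R i j * w j)"

definition dl :: "'i \<Rightarrow> 'i \<Rightarrow> complex" where
  "dl a = (\<lambda>i. if i = a then 1 else 0)"

lemma bf_add_left: "bf S R (\<lambda>i. u i + w i) z = bf S R u z + bf S R w z"
  unfolding bf_def by (simp add: distrib_right sum.distrib)
lemma bf_add_right: "bf S R z (\<lambda>i. u i + w i) = bf S R z u + bf S R z w"
  unfolding bf_def by (simp add: distrib_left sum.distrib)
lemma bf_scale_left: "bf S R (\<lambda>i. c * u i) z = cnj c * bf S R u z"
  unfolding bf_def by (simp add: sum_distrib_left mult.assoc)
lemma bf_scale_right: "bf S R u (\<lambda>i. c * w i) = c * bf S R u w"
  unfolding bf_def by (simp add: sum_distrib_left mult.assoc mult.left_commute)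

lemma bf_dl_left: assumes "finite S" "a \<in> S" shows "bf S R (dl a) w = (\<Sum>j\<in>S. R a j * w j)"
proof -
  have "bf S R (dl a) w = (\<Sum>i\<in>S. if i = a then (\<Sum>j\<in>S. R i j * w j) else 0)"
    unfolding bf_def dl_def by (intro sum.cong) auto
  then show ?thesis using assms by simp
qed
lemma bf_dl_right: assumes "finite S" "b \<in> S" shows "bf S R u (dl b) = (\<Sum>i\<in>S. cnj (u i) * R i b)"
proof -
  have "bf S R u (dl b) = (\<Sum>i\<in>S. \<Sum>j\<in>S. if j = b then cnj (u i) * R i j else 0)"
    unfolding bf_def dl_def by (intro sum.cong) auto
  then show ?thesis using assms by simp
qed
lemma bf_dl_dl: assumes "finite S" "a \<in> S" "b \<in> S" shows "bf S R (dl a) (dl b) = R a b"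
proof -
  have "(\<Sum>j\<in>S. R a j * dl b j) = (\<Sum>j\<in>S. if j = b then R a j else 0)"
    unfolding dl_def by (intro sum.cong) auto
  then show ?thesis using assms by (simp add: bf_dl_left)
qed

lemma bf_restrict:
  assumes "finite S" "a \<notin> S" "v a = 0"
  shows "bf (insert a S) R v v = bf S R v v"
  using assms unfolding bf_def by (simp add: sum.insert)

lemma bf_upd: "a \<notin> S \<Longrightarrow> bf S R (v(a:=x)) (w(a:=y)) = bf S R v w"
  unfolding bf_def by (intro sum.cong refl) auto

lemma bf_expand2:
  assumes "finite T" "a \<in> T" "j \<in> T"
  shows "bf T R (\<lambda>i. s * dl a i + t * dl j i) (\<lambda>i. s * dl a i + t * dl j i)
     = cnj s * s * R a a + cnj s * t * R a j + cnj t * s * R j a + cnj t * t * R j j"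
  using assms by (simp add: bf_add_left bf_add_right bf_scale_left bf_scale_right bf_dl_dl algebra_simps)

lemma bf_expand1:
  assumes "finite T" "a \<in> T"
  shows "bf T R (\<lambda>i. w i + t * dl a i) (\<lambda>i. w i + t * dl a i)
     = bf T R w w + t * bf T R w (dl a) + cnj t * bf T R (dl a) w + cnj t * t * R a a"
  using assms by (simp add: bf_add_left bf_add_right bf_scale_left bf_scale_right bf_dl_dl algebra_simps)

lemma cholesky:
  assumes "finite S"
  shows "(\<forall>i\<in>S. \<forall>j\<in>S. R i j = cnj (R j i)) \<Longrightarrow> (\<forall>v. 0 \<le> Re (bf S R v v))
    \<Longrightarrow> \<exists>G. \<forall>i\<in>S. \<forall>j\<in>S. R i j = (\<Sum>k\<in>S. G i k * cnj (G j k))"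
  using assms
proof (induction S arbitrary: R rule: finite_induct)
  case empty then show ?case by simp
next
  case (insert a S R)
  note fin = insert.hyps(1) and aS = insert.hyps(2)
  define T where "T = insert a S"
  have finT: "finite T" using fin by (simp add: T_def)
  have herm: "\<And>i j. i \<in> T \<Longrightarrow> j \<in> T \<Longrightarrow> R i j = cnj (R j i)" using insert.prems(1) unfolding T_def by blast
  have psd: "\<And>v. 0 \<le> Re (bf T R v v)" using insert.prems(2) unfolding T_def by blast
  have aT: "a \<in> T" by (simp add: T_def)
  have ST: "S \<subseteq> T" by (auto simp: T_def)
  have restr: "bf S R' v v = bf T R' (v(a:=0)) (v(a:=0))" for R' v
  proof -
    have "bf T R' (v(a:=0)) (v(a:=0)) = bf S R' (v(a:=0)) (v(a:=0))"
      unfolding T_def by (rule bf_restrict[OF fin aS]) simp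
    also have "\<dots> = bf S R' v v" by (rule bf_upd[OF aS])
    finally show ?thesis by simp
  qed
  have imaa: "Im (R a a) = 0"
  proof -
    have "Im (R a a) = Im (cnj (R a a))" using herm[OF aT aT] by simp
    then show ?thesis by simp
  qed
  have reaa: "0 \<le> Re (R a a)" using psd[of "dl a"] bf_dl_dl[OF finT aT aT] by simp
  show ?case
  proof (cases "Re (R a a) = 0")
    case True
    then have raa: "R a a = 0" using imaa by (simp add: complex_eq_iff)
    have row0: "R a j = 0" if jS: "j \<in> S" for j
    proof (rule ccontr)
      assume c0: "R a j \<noteq> 0"
      define c where "c = R a j"
      have jT: "j \<in> T" using jS ST by auto
      define t :: real where "t = (\<bar>Re (R j j)\<bar> + 1) / (2 * (cmod c)^2)"
      have cpos: "cmod c > 0" using c0 by (simp add: c_def)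
      define s where "s = - (complex_of_real t * c)"
      have "bf T R (\<lambda>i. s * dl a i + 1 * dl j i) (\<lambda>i. s * dl a i + 1 * dl j i)
          = cnj s * s * R a a + cnj s * 1 * R a j + cnj 1 * s * R j a + cnj 1 * 1 * R j j"
        by (rule bf_expand2[OF finT aT jT])
      also have "\<dots> = cnj s * c + s * cnj c + R j j" using raa herm[OF jT aT] by (simp add: c_def)
      finally have e: "bf T R (\<lambda>i. s * dl a i + 1 * dl j i) (\<lambda>i. s * dl a i + 1 * dl j i) = cnj s * c + s * cnj c + R j j" .
      have "Re (cnj s * c + s * cnj c) = - 2 * t * (cmod c)^2"
        unfolding s_def cmod_power2 by (simp add: algebra_simps power2_eq_square)
      also have "\<dots> = - (\<bar>Re (R j j)\<bar> + 1)" unfolding t_def using cpos by (simp add: field_simps)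
      finally have "Re (bf T R (\<lambda>i. s * dl a i + 1 * dl j i) (\<lambda>i. s * dl a i + 1 * dl j i)) = - (\<bar>Re (R j j)\<bar> + 1) + Re (R j j)"
        unfolding e by simp
      moreover have "0 \<le> Re (bf T R (\<lambda>i. s * dl a i + 1 * dl j i) (\<lambda>i. s * dl a i + 1 * dl j i))" by (rule psd)
      ultimately show False by linarith
    qed
    have "\<exists>G. \<forall>i\<in>S. \<forall>j\<in>S. R i j = (\<Sum>k\<in>S. G i k * cnj (G j k))"
    proof (rule insert.IH)
      show "\<forall>i\<in>S. \<forall>j\<in>S. R i j = cnj (R j i)" using herm ST by blast
      show "\<forall>v. 0 \<le> Re (bf S R v v)" using psd restr by simp
    qed
    then obtain G where G: "\<And>i j. i \<in> S \<Longrightarrow> j \<in> S \<Longrightarrow> R i j = (\<Sum>k\<in>S. G i k * cnj (G j k))" by blast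
    define G' where "G' i k = (if i = a \<or> k = a then 0 else G i k)" for i k
    show ?thesis
    proof (intro exI ballI)
      fix i j assume iT: "i \<in> insert a S" and jT: "j \<in> insert a S"
      have sum_eq: "(\<Sum>k\<in>insert a S. G' i k * cnj (G' j k)) = (\<Sum>k\<in>S. G' i k * cnj (G' j k))"
        using fin aS by (simp add: G'_def)
      show "R i j = (\<Sum>k\<in>insert a S. G' i k * cnj (G' j k))"
      proof (cases "i = a \<or> j = a")
        case True
        have "R i j = 0"
        proof (cases "i = a")
          case True then show ?thesis using jT raa row0 by auto
        next
          case False
          then have "j = a" "i \<in> S" using \<open>i = a \<or> j = a\<close> iT by auto
          then show ?thesis using herm[of i a] row0[of i] ST aT by auto
        qed
        moreover have "(\<Sum>k\<in>S. G' i k * cnj (G' j k)) = 0" using True by (intro sum.neutral) (auto simp: G'_def)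
        ultimately show ?thesis using sum_eq by simp
      next
        case False
        then have "i \<in> S" "j \<in> S" using iT jT by auto
        moreover have "(\<Sum>k\<in>S. G' i k * cnj (G' j k)) = (\<Sum>k\<in>S. G i k * cnj (G j k))"
          using False aS by (intro sum.cong) (auto simp: G'_def)
        ultimately show ?thesis using sum_eq G by simp
      qed
    qed
  next
    case False
    define r where "r = Re (R a a)"
    have rpos: "r > 0" using False reaa by (simp add: r_def)
    have raa: "R a a = complex_of_real r" using imaa by (simp add: r_def complex_eq_iff)
    define sr where "sr = complex_of_real (sqrt r)"
    have sr2: "sr * sr = complex_of_real r" using rpos unfolding sr_def by (simp flip: of_real_mult)
    have srnz: "sr \<noteq> 0" using rpos unfolding sr_def by simp
    have cnjsr: "cnj sr = sr" unfolding sr_def by simp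
    define g where "g i = R i a / sr" for i
    define R' where "R' i j = R i j - g i * cnj (g j)" for i j
    have gg: "g i * cnj (g j) = R i a * R a j / complex_of_real r" if "j \<in> T" for i j
    proof -
      have "cnj (R j a) = R a j" using herm[OF aT that] by simp
      then show ?thesis unfolding g_def using srnz by (simp add: cnjsr sr2[symmetric] field_simps)
    qed
    have "\<exists>G. \<forall>i\<in>S. \<forall>j\<in>S. R' i j = (\<Sum>k\<in>S. G i k * cnj (G j k))"
    proof (rule insert.IH)
      show "\<forall>i\<in>S. \<forall>j\<in>S. R' i j = cnj (R' j i)"
        using herm ST unfolding R'_def by (auto simp: mult.commute)
      show "\<forall>v. 0 \<le> Re (bf S R' v v)"
      proof
        fix v
        define w where "w = v(a:=(0::complex))"
        define \<beta> where "\<beta> = (\<Sum>j\<in>T. R a j * w j)"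
        have b1: "bf T R (dl a) w = \<beta>" unfolding \<beta>_def by (rule bf_dl_left[OF finT aT])
        have b2: "bf T R w (dl a) = cnj \<beta>"
        proof -
          have "bf T R w (dl a) = (\<Sum>i\<in>T. cnj (w i) * R i a)" by (rule bf_dl_right[OF finT aT])
          also have "\<dots> = (\<Sum>i\<in>T. cnj (R a i * w i))" using herm[OF _ aT] by (intro sum.cong) (auto simp: mult.commute)
          finally show ?thesis unfolding \<beta>_def by (simp add: cnj_sum)
        qed
        have "bf T R' w w = bf T R w w - (\<Sum>i\<in>T. \<Sum>j\<in>T. cnj (w i) * R i a * (R a j * w j)) / complex_of_real r"
          unfolding bf_def R'_def
          by (simp add: gg algebra_simps sum_subtractf sum_divide_distrib)
        also have "(\<Sum>i\<in>T. \<Sum>j\<in>T. cnj (w i) * R i a * (R a j * w j)) = bf T R w (dl a) * \<beta>"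
          unfolding bf_dl_right[OF finT aT] \<beta>_def by (simp add: sum_product)
        finally have e1: "bf T R' w w = bf T R w w - cnj \<beta> * \<beta> / complex_of_real r" by (simp add: b2)
        define t where "t = - \<beta> / complex_of_real r"
        have "bf T R (\<lambda>i. w i + t * dl a i) (\<lambda>i. w i + t * dl a i)
            = bf T R w w + t * cnj \<beta> + cnj t * \<beta> + cnj t * t * complex_of_real r"
          using bf_expand1[OF finT aT, of R w t] b1 b2 raa by simp
        also have "\<dots> = bf T R w w - cnj \<beta> * \<beta> / complex_of_real r"
          unfolding t_def using rpos by (simp add: field_simps power2_eq_square)
        finally have e2: "bf T R' w w = bf T R (\<lambda>i. w i + t * dl a i) (\<lambda>i. w i + t * dl a i)"
          using e1 by simp
        show "0 \<le> Re (bf S R' v v)" using restr[of R' v] e2 psd unfolding w_def by simp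
      qed
    qed
    then obtain G where G: "\<And>i j. i \<in> S \<Longrightarrow> j \<in> S \<Longrightarrow> R' i j = (\<Sum>k\<in>S. G i k * cnj (G j k))" by blast
    define G' where "G' i k = (if k = a then g i else if i = a then 0 else G i k)" for i k
    show ?thesis
    proof (intro exI ballI)
      fix i j assume iT: "i \<in> insert a S" and jT: "j \<in> insert a S"
      have sum_eq: "(\<Sum>k\<in>insert a S. G' i k * cnj (G' j k)) = g i * cnj (g j) + (\<Sum>k\<in>S. G' i k * cnj (G' j k))"
        using fin aS by (simp add: G'_def)
      have jT': "j \<in> T" using jT by (simp add: T_def)
      have iT': "i \<in> T" using iT by (simp add: T_def)
      show "R i j = (\<Sum>k\<in>insert a S. G' i k * cnj (G' j k))"
      proof (cases "i = a \<or> j = a")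
        case True
        have "(\<Sum>k\<in>S. G' i k * cnj (G' j k)) = 0" using True aS by (intro sum.neutral) (auto simp: G'_def)
        moreover have "g i * cnj (g j) = R i j"
        proof (cases "i = a")
          case True
          then show ?thesis using gg[OF jT'] raa rpos by simp
        next
          case False
          then have "j = a" using \<open>i = a \<or> j = a\<close> by simp
          then show ?thesis using gg[OF jT'] raa rpos by simp
        qed
        ultimately show ?thesis using sum_eq by simp
      next
        case False
        then have "i \<in> S" "j \<in> S" using iT jT by auto
        moreover have "(\<Sum>k\<in>S. G' i k * cnj (G' j k)) = (\<Sum>k\<in>S. G i k * cnj (G j k))"
          using False aS by (intro sum.cong) (auto simp: G'_def)
        ultimately show ?thesis using sum_eq G unfolding R'_def by (metis diff_add_cancel add.commute)
      qed
    qed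
  qed
qed


lemma pair_lt: fixes a b d :: nat assumes "a < d" "b < d" shows "a*d+b < d*d"
proof -
  have "a*d + b < a*d + d" using assms by simp
  also have "\<dots> = (a+1)*d" by simp
  also have "\<dots> \<le> d*d" using assms by (intro mult_le_mono1) simp
  finally show ?thesis .
qed

lemma sum_pair: fixes d :: nat shows "(\<Sum>p<d*d. f p) = (\<Sum>a<d. \<Sum>b<d. f (a*d+b))"
proof -
  have "(\<Sum>a<d. \<Sum>b<d. f (a*d+b)) = (\<Sum>(a,b)\<in>{..<d}\<times>{..<d}. f (a*d+b))"
    by (simp add: sum.cartesian_product)
  also have "\<dots> = (\<Sum>p<d*d. f p)"
    apply (rule sum.reindex_bij_witness[where i="\<lambda>p. (p div d, p mod d)" and j="\<lambda>(a,b). a*d+b"])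
        apply (auto simp: pair_lt less_mult_imp_div_less)
    apply (metis mod_less_divisor mult_0_right neq0_conv not_less_zero)
    done
  finally show ?thesis by simp
qed

lemma kron_form:
  assumes hB: "hermitian_mat d B"
  shows "(\<Sum>p<d*d. \<Sum>q<d*d. cnj (u p) * kron d A B p q * u q)
    = (\<Sum>a<d. \<Sum>b<d. cnj (\<Sum>b'<d. B b b' * u (a*d+b')) * (\<Sum>a'<d. A a a' * u (a'*d+b)))"
proof -
  have cB: "cnj (B b b') = B b' b" if "b < d" "b' < d" for b b'
    using hB that unfolding hermitian_mat_def by (metis complex_cnj_cnj)
  have "(\<Sum>p<d*d. \<Sum>q<d*d. cnj (u p) * kron d A B p q * u q)
      = (\<Sum>a<d. \<Sum>b<d. \<Sum>a'<d. \<Sum>b'<d. cnj (u (a*d+b)) * (A a a' * B b b') * u (a'*d+b'))"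
    by (simp add: sum_pair kron_def)
  also have "\<dots> = (\<Sum>a<d. \<Sum>b<d. \<Sum>b'<d. \<Sum>a'<d. cnj (u (a*d+b)) * (A a a' * B b b') * u (a'*d+b'))"
    by (rule sum.cong[OF refl], rule sum.cong[OF refl], rule sum.swap)
  also have "\<dots> = (\<Sum>a<d. \<Sum>b<d. \<Sum>b'<d. \<Sum>a'<d. cnj (u (a*d+b')) * (A a a' * B b' b) * u (a'*d+b))"
    by (rule sum.cong[OF refl], rule sum.swap)
  also have "\<dots> = (\<Sum>a<d. \<Sum>b<d. cnj (\<Sum>b'<d. B b b' * u (a*d+b')) * (\<Sum>a'<d. A a a' * u (a'*d+b)))"
  proof (intro sum.cong refl)
    fix a b assume "b \<in> {..<d}"
    then have "(\<Sum>b'<d. \<Sum>a'<d. cnj (u (a*d+b')) * (A a a' * B b' b) * u (a'*d+b))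
      = (\<Sum>b'<d. \<Sum>a'<d. cnj (B b b' * u (a*d+b')) * (A a a' * u (a'*d+b)))"
      by (intro sum.cong refl) (simp add: cB)
    also have "\<dots> = cnj (\<Sum>b'<d. B b b' * u (a*d+b')) * (\<Sum>a'<d. A a a' * u (a'*d+b))"
      by (simp add: cnj_sum sum_product)
    finally show "(\<Sum>b'<d. \<Sum>a'<d. cnj (u (a*d+b')) * (A a a' * B b' b) * u (a'*d+b))
      = cnj (\<Sum>b'<d. B b b' * u (a*d+b')) * (\<Sum>a'<d. A a a' * u (a'*d+b))" .
  qed
  finally show ?thesis .
qed

lemma trace_kron:
  assumes hB: "hermitian_mat d B"
    and G: "\<forall>i\<in>{..<d*d}. \<forall>j\<in>{..<d*d}. \<rho> i j = (\<Sum>k\<in>{..<d*d}. G i k * cnj (G j k))"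
  shows "trace_mat (d*d) (mat_mult (d*d) (kron d A B) \<rho>) = (\<Sum>k<d*d. \<Sum>a<d. \<Sum>b<d.
      cnj (\<Sum>b'<d. B b b' * G (a*d+b') k) * (\<Sum>a'<d. A a a' * G (a'*d+b) k))"
proof -
  have "trace_mat (d*d) (mat_mult (d*d) (kron d A B) \<rho>) = (\<Sum>p<d*d. \<Sum>q<d*d. kron d A B p q * \<rho> q p)"
    by (simp add: trace_mat_def mat_mult_def)
  also have "\<dots> = (\<Sum>p<d*d. \<Sum>q<d*d. \<Sum>k<d*d. cnj (G p k) * kron d A B p q * G q k)"
    using G by (auto intro!: sum.cong simp: sum_distrib_left mult.commute mult.left_commute)
  also have "\<dots> = (\<Sum>p<d*d. \<Sum>k<d*d. \<Sum>q<d*d. cnj (G p k) * kron d A B p q * G q k)"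
    by (rule sum.cong[OF refl], rule sum.swap)
  also have "\<dots> = (\<Sum>k<d*d. \<Sum>p<d*d. \<Sum>q<d*d. cnj (G p k) * kron d A B p q * G q k)"
    by (rule sum.swap)
  also have "\<dots> = (\<Sum>k<d*d. \<Sum>a<d. \<Sum>b<d.
      cnj (\<Sum>b'<d. B b b' * G (a*d+b') k) * (\<Sum>a'<d. A a a' * G (a'*d+b) k))"
    by (rule sum.cong[OF refl], rule kron_form[OF hB])
  finally show ?thesis .
qed

definition contr :: "nat \<Rightarrow> (nat \<Rightarrow> nat \<Rightarrow> complex) \<Rightarrow> bool" where
  "contr d M \<longleftrightarrow> (\<forall>u. (\<Sum>i<d. (cmod (\<Sum>j<d. M i j * u j))^2) \<le> (\<Sum>i<d. (cmod (u i))^2))"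

lemma alf_norm:
  fixes d :: nat
  assumes "contr d A"
  shows "(\<Sum>a<d. \<Sum>b<d. (cmod (\<Sum>a'<d. A a a' * u (a'*d+b)))^2) \<le> (\<Sum>p<d*d. (cmod (u p))^2)"
proof -
  have "(\<Sum>a<d. \<Sum>b<d. (cmod (\<Sum>a'<d. A a a' * u (a'*d+b)))^2) = (\<Sum>b<d. \<Sum>a<d. (cmod (\<Sum>a'<d. A a a' * u (a'*d+b)))^2)"
    by (rule sum.swap)
  also have "\<dots> \<le> (\<Sum>b<d. \<Sum>a<d. (cmod (u (a*d+b)))^2)"
    by (rule sum_mono) (use assms in \<open>simp add: contr_def\<close>)
  also have "\<dots> = (\<Sum>a<d. \<Sum>b<d. (cmod (u (a*d+b)))^2)" by (rule sum.swap)
  also have "\<dots> = (\<Sum>p<d*d. (cmod (u p))^2)" by (simp add: sum_pair)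
  finally show ?thesis .
qed

lemma bef_norm:
  fixes d :: nat
  assumes "contr d B"
  shows "(\<Sum>a<d. \<Sum>b<d. (cmod (\<Sum>b'<d. B b b' * u (a*d+b')))^2) \<le> (\<Sum>p<d*d. (cmod (u p))^2)"
proof -
  have "(\<Sum>a<d. \<Sum>b<d. (cmod (\<Sum>b'<d. B b b' * u (a*d+b')))^2) \<le> (\<Sum>a<d. \<Sum>b<d. (cmod (u (a*d+b)))^2)"
    by (rule sum_mono) (use assms in \<open>simp add: contr_def\<close>)
  also have "\<dots> = (\<Sum>p<d*d. (cmod (u p))^2)" by (simp add: sum_pair)
  finally show ?thesis .
qed

lemma cmod_diff_sq: "(cmod (f - g))^2 = (cmod f)^2 + (cmod g)^2 - 2 * Re (cnj g * f)"
  unfolding cmod_power2 by (simp add: power2_eq_square algebra_simps)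

lemma sum_triple: "finite A \<Longrightarrow> finite B \<Longrightarrow> finite C \<Longrightarrow>
  (\<Sum>t\<in>A\<times>B\<times>C. h t) = (\<Sum>x\<in>A. \<Sum>y\<in>B. \<Sum>z\<in>C. h (x,y,z))"
  by (simp add: sum.cartesian_product)

definition IP :: "'t set \<Rightarrow> ('t \<Rightarrow> complex) \<Rightarrow> ('t \<Rightarrow> complex) \<Rightarrow> complex" where
  "IP I f g = (\<Sum>t\<in>I. cnj (f t) * g t)"
definition NN :: "'t set \<Rightarrow> ('t \<Rightarrow> complex) \<Rightarrow> real" where
  "NN I f = (\<Sum>t\<in>I. (cmod (f t))^2)"

lemma IP_self: "IP I f f = complex_of_real (NN I f)"
proof -
  have "cnj z * z = complex_of_real ((cmod z)^2)" for z
    by (metis complex_norm_square mult.commute of_real_power)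
  then show ?thesis unfolding IP_def NN_def of_real_sum by simp
qed

lemma IP_eq:
  assumes fin: "finite I" and "NN I f \<le> 1" "NN I g \<le> 1" "IP I g f = 1"
  shows "\<forall>t\<in>I. f t = g t"
proof -
  have "(\<Sum>t\<in>I. (cmod (f t - g t))^2) = NN I f + NN I g - 2 * Re (IP I g f)"
    unfolding NN_def IP_def cmod_diff_sq by (simp add: sum.distrib sum_subtractf sum_distrib_left Re_sum)
  also have "\<dots> \<le> 0" using assms by simp
  finally have "(\<Sum>t\<in>I. (cmod (f t - g t))^2) = 0"
    by (meson antisym sum_nonneg zero_le_power2)
  then have "\<forall>t\<in>I. (cmod (f t - g t))^2 = 0" using fin by (simp add: sum_nonneg_eq_0_iff)
  then show ?thesis by simp
qed

lemma IP_gram: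
  fixes v :: "'x \<Rightarrow> real" and X :: "'x set"
  assumes "finite X"
  shows "(\<Sum>x\<in>X. \<Sum>y\<in>X. complex_of_real (v x * v y) * IP I (\<alpha> y) (\<alpha> x))
       = IP I (\<lambda>t. \<Sum>y\<in>X. complex_of_real (v y) * \<alpha> y t) (\<lambda>t. \<Sum>x\<in>X. complex_of_real (v x) * \<alpha> x t)"
proof -
  have "IP I (\<lambda>t. \<Sum>y\<in>X. complex_of_real (v y) * \<alpha> y t) (\<lambda>t. \<Sum>x\<in>X. complex_of_real (v x) * \<alpha> x t)
      = (\<Sum>t\<in>I. \<Sum>x\<in>X. \<Sum>y\<in>X. complex_of_real (v x) * (complex_of_real (v y) * (\<alpha> x t * cnj (\<alpha> y t))))"
    unfolding IP_def by (simp add: cnj_sum sum_product mult_ac)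
  also have "\<dots> = (\<Sum>x\<in>X. \<Sum>t\<in>I. \<Sum>y\<in>X. complex_of_real (v x) * (complex_of_real (v y) * (\<alpha> x t * cnj (\<alpha> y t))))"
    by (rule sum.swap)
  also have "\<dots> = (\<Sum>x\<in>X. \<Sum>y\<in>X. \<Sum>t\<in>I. complex_of_real (v x) * (complex_of_real (v y) * (\<alpha> x t * cnj (\<alpha> y t))))"
    by (rule sum.cong[OF refl], rule sum.swap)
  also have "\<dots> = (\<Sum>x\<in>X. \<Sum>y\<in>X. complex_of_real (v x * v y) * IP I (\<alpha> y) (\<alpha> x))"
    unfolding IP_def by (simp add: sum_distrib_left mult_ac)
  finally show ?thesis by simp
qed

lemma IP_cnj: "cnj (IP I f g) = IP I g f"
  unfolding IP_def by (simp add: cnj_sum mult.commute)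

lemma cor_diag_elliptope:
  fixes C :: "real^'n^'n"
  assumes CC: "C \<in> Cor" and diag: "\<And>x. C $ x $ x = 1"
    and contr_all: "\<And>d M. d \<ge> 1 \<Longrightarrow> observable d M \<Longrightarrow> contr d M"
  shows "C \<in> elliptope"
proof -
  obtain d M N \<rho> where H: "d \<ge> 1 \<and> (\<forall>x. observable d (M x)) \<and> (\<forall>y. observable d (N y)) \<and>
        psd_mat (d*d) \<rho> \<and> trace_mat (d*d) \<rho> = 1 \<and>
        (\<forall>x y. complex_of_real (C $ x $ y) = trace_mat (d*d) (mat_mult (d*d) (kron d (M x) (N y)) \<rho>))"
    using CC unfolding Cor_def mem_Collect_eq by blast
  then have d: "d \<ge> 1" and obsM: "\<And>x. observable d (M x)" and obsN: "\<And>y. observable d (N y)"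
    and psd: "psd_mat (d*d) \<rho>" and tr: "trace_mat (d*d) \<rho> = 1"
    and ce: "\<And>x y. complex_of_real (C $ x $ y) = trace_mat (d*d) (mat_mult (d*d) (kron d (M x) (N y)) \<rho>)"
    by blast+
  define D where "D = d*d"
  have hm: "hermitian_mat D \<rho>" using psd unfolding psd_mat_def D_def by blast
  have herm: "\<forall>i\<in>{..<D}. \<forall>j\<in>{..<D}. \<rho> i j = cnj (\<rho> j i)"
    using hm unfolding hermitian_mat_def by blast
  have pos: "\<forall>v. 0 \<le> Re (bf {..<D} \<rho> v v)"
  proof
    fix v
    have "let q = (\<Sum>i<D. \<Sum>j<D. cnj (v i) * \<rho> i j * v j) in q \<in> \<real> \<and> 0 \<le> Re q"
      using psd unfolding psd_mat_def D_def by blast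
    then show "0 \<le> Re (bf {..<D} \<rho> v v)" unfolding Let_def bf_def by blast
  qed
  obtain G where G: "\<forall>i\<in>{..<D}. \<forall>j\<in>{..<D}. \<rho> i j = (\<Sum>k\<in>{..<D}. G i k * cnj (G j k))"
    using cholesky[OF finite_lessThan herm pos] by blast
  define I where "I = {..<D} \<times> {..<d} \<times> {..<d}"
  have finI: "finite I" unfolding I_def by simp
  define \<alpha> where "\<alpha> x = (\<lambda>(k,a,b). \<Sum>a'<d. M x a a' * G (a'*d+b) k)" for x
  define \<beta> where "\<beta> y = (\<lambda>(k,a,b). \<Sum>b'<d. N y b b' * G (a*d+b') k)" for y
  have c_eq: "complex_of_real (C $ x $ y) = IP I (\<beta> y) (\<alpha> x)" for x y
  proof -
    have hB: "hermitian_mat d (N y)" using obsN unfolding observable_def by simp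
    have "complex_of_real (C $ x $ y) = (\<Sum>k<D. \<Sum>a<d. \<Sum>b<d. cnj (\<Sum>b'<d. N y b b' * G (a*d+b') k) * (\<Sum>a'<d. M x a a' * G (a'*d+b) k))"
      unfolding ce D_def by (rule trace_kron[OF hB]) (use G in \<open>simp add: D_def\<close>)
    also have "\<dots> = IP I (\<beta> y) (\<alpha> x)" unfolding IP_def I_def by (simp add: sum_triple \<alpha>_def \<beta>_def)
    finally show ?thesis .
  qed
  have trace1: "(\<Sum>k<D. \<Sum>p<D. (cmod (G p k))^2) = 1"
  proof -
    have "(\<Sum>p<D. \<rho> p p) = (\<Sum>p<D. \<Sum>k<D. complex_of_real ((cmod (G p k))^2))"
    proof (rule sum.cong[OF refl])
      fix p assume "p \<in> {..<D}"
      then have "\<rho> p p = (\<Sum>k<D. G p k * cnj (G p k))" using G by simp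
      also have "\<dots> = (\<Sum>k<D. complex_of_real ((cmod (G p k))^2))"
        by (intro sum.cong refl) (metis complex_norm_square of_real_power)
      finally show "\<rho> p p = (\<Sum>k<D. complex_of_real ((cmod (G p k))^2))" .
    qed
    then have "complex_of_real (\<Sum>p<D. \<Sum>k<D. (cmod (G p k))^2) = 1"
      using tr unfolding trace_mat_def D_def by (simp add: of_real_sum)
    then have "(\<Sum>p<D. \<Sum>k<D. (cmod (G p k))^2) = 1" using of_real_eq_1_iff by blast
    moreover have "(\<Sum>k<D. \<Sum>p<D. (cmod (G p k))^2) = (\<Sum>p<D. \<Sum>k<D. (cmod (G p k))^2)"
      by (rule sum.swap)
    ultimately show ?thesis by simp
  qed
  have n\<alpha>: "NN I (\<alpha> x) \<le> 1" for x
  proof -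
    have cM: "contr d (M x)" by (rule contr_all[OF d obsM])
    have "NN I (\<alpha> x) = (\<Sum>k<D. \<Sum>a<d. \<Sum>b<d. (cmod (\<Sum>a'<d. M x a a' * G (a'*d+b) k))^2)"
      unfolding NN_def I_def by (simp add: sum_triple \<alpha>_def)
    also have "\<dots> \<le> (\<Sum>k<D. \<Sum>p<D. (cmod (G p k))^2)"
      unfolding D_def by (rule sum_mono) (rule alf_norm[OF cM, of "\<lambda>q. G q _", simplified])
    finally show ?thesis using trace1 by simp
  qed
  have n\<beta>: "NN I (\<beta> y) \<le> 1" for y
  proof -
    have cN: "contr d (N y)" by (rule contr_all[OF d obsN])
    have "NN I (\<beta> y) = (\<Sum>k<D. \<Sum>a<d. \<Sum>b<d. (cmod (\<Sum>b'<d. N y b b' * G (a*d+b') k))^2)"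
      unfolding NN_def I_def by (simp add: sum_triple \<beta>_def)
    also have "\<dots> \<le> (\<Sum>k<D. \<Sum>p<D. (cmod (G p k))^2)"
      unfolding D_def by (rule sum_mono) (rule bef_norm[OF cN, of "\<lambda>q. G q _", simplified])
    finally show ?thesis using trace1 by simp
  qed
  have eqab: "\<forall>t\<in>I. \<alpha> x t = \<beta> x t" for x
    by (rule IP_eq[OF finI n\<alpha> n\<beta>]) (use c_eq[of x x] diag in simp)
  have C_ip: "complex_of_real (C $ x $ y) = IP I (\<alpha> y) (\<alpha> x)" for x y
  proof -
    have "IP I (\<beta> y) (\<alpha> x) = IP I (\<alpha> y) (\<alpha> x)" unfolding IP_def using eqab[of y] by (intro sum.cong) auto
    then show ?thesis using c_eq by simp
  qed
  have sym: "C $ j $ i = C $ i $ j" for i j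
  proof -
    have "complex_of_real (C $ j $ i) = IP I (\<alpha> i) (\<alpha> j)" by (rule C_ip)
    also have "\<dots> = cnj (IP I (\<alpha> j) (\<alpha> i))" by (simp add: IP_cnj)
    also have "\<dots> = complex_of_real (C $ i $ j)" by (simp flip: C_ip)
    finally show ?thesis by simp
  qed
  have psdC: "0 \<le> v \<bullet> (C *v v)" for v :: "real^'n"
  proof -
    define \<gamma> where "\<gamma> = (\<lambda>t. \<Sum>x\<in>UNIV. complex_of_real (v $ x) * \<alpha> x t)"
    have "complex_of_real (v \<bullet> (C *v v)) = (\<Sum>x\<in>UNIV. \<Sum>y\<in>UNIV. complex_of_real (v $ x * v $ y) * IP I (\<alpha> y) (\<alpha> x))"
      unfolding inner_vec_def matrix_vector_mult_def
      by (simp add: of_real_sum sum_distrib_left C_ip[symmetric] mult_ac)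
    also have "\<dots> = IP I \<gamma> \<gamma>" unfolding \<gamma>_def by (rule IP_gram) simp
    also have "\<dots> = complex_of_real (NN I \<gamma>)" by (rule IP_self)
    finally have "v \<bullet> (C *v v) = NN I \<gamma>" using of_real_eq_iff by blast
    then show ?thesis unfolding NN_def by (simp add: sum_nonneg)
  qed
  have tC: "transpose C = C"
  proof -
    have "\<forall>i j. transpose C $ i $ j = C $ i $ j" using sym by (simp add: transpose_def)
    then show ?thesis by (simp add: Finite_Cartesian_Product.vec_eq_iff)
  qed
  show ?thesis unfolding elliptope_def mem_Collect_eq using tC psdC diag by blast
qed


lemma flip_flip: "flip_bit k (flip_bit k (i::nat)) = i"
  by (rule bit_eqI) (auto simp: bit_flip_bit_iff)

lemma flip_comm: "flip_bit k (flip_bit l (i::nat)) = flip_bit l (flip_bit k i)"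
  by (rule bit_eqI) (auto simp: bit_flip_bit_iff)

lemma flip_ne: assumes "k \<noteq> l" shows "flip_bit k (i::nat) \<noteq> flip_bit l i"
proof
  assume eq: "flip_bit k i = flip_bit l i"
  have "bit (flip_bit k i) k = bit (flip_bit l i) k" by (simp only: eq)
  then show False using assms by (simp add: bit_flip_bit_iff)
qed

lemma flip_lt: assumes "(i::nat) < 2^m" "k < m" shows "flip_bit k i < 2^m"
proof -
  have "take_bit m i = i" using assms by (simp add: take_bit_nat_eq_self_iff)
  then have "take_bit m (flip_bit k i) = flip_bit k i"
    using assms by (simp add: take_bit_flip_bit_eq)
  then show ?thesis by (simp add: take_bit_nat_eq_self_iff)
qed

definition sg :: "nat \<Rightarrow> nat \<Rightarrow> complex" where
  "sg k i = (-1) ^ card {t. t < k \<and> bit i t}"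

lemma sg_sq: "sg k i * sg k i = 1"
proof -
  have "(-1::complex)^c * (-1)^c = ((-1)*(-1))^c" for c :: nat by (rule power_mult_distrib[symmetric])
  then show ?thesis unfolding sg_def by simp
qed

lemma sg_flip_le: "k \<le> l \<Longrightarrow> sg k (flip_bit l i) = sg k i"
proof -
  assume "k \<le> l"
  then have "{t. t < k \<and> bit (flip_bit l i) t} = {t. t < k \<and> bit i t}"
    by (auto simp: bit_flip_bit_iff)
  then show ?thesis unfolding sg_def by simp
qed

lemma sg_flip_lt: assumes "k < l" shows "sg l (flip_bit k i) = - sg l i"
proof -
  define A where "A = {t. t < l \<and> bit i t}"
  define A' where "A' = {t. t < l \<and> bit (flip_bit k i) t}"
  have finA: "finite A" unfolding A_def by simp
  have sgi: "sg l i = (-1) ^ card A" unfolding sg_def A_def by simp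
  have sgf: "sg l (flip_bit k i) = (-1) ^ card A'" unfolding sg_def A'_def by simp
  show ?thesis
  proof (cases "bit i k")
    case True
    have e: "A' = A - {k}" unfolding A'_def A_def using assms True
      by (auto simp add: bit_flip_bit_iff)
    have kA: "k \<in> A" using True assms by (simp add: A_def)
    then have "card A \<noteq> 0" using finA by auto
    then obtain c0 where c0: "card A = Suc c0" using not0_implies_Suc by blast
    have "card A' = c0" unfolding e using card_Diff_singleton[OF kA] c0 by simp
    then show ?thesis unfolding sgi sgf c0 by simp
  next
    case False
    have e: "A' = insert k A" unfolding A'_def A_def using assms False
      by (auto simp add: bit_flip_bit_iff)
    have kA: "k \<notin> A" using False by (simp add: A_def)
    have "card A' = Suc (card A)" unfolding e using finA kA by simp
    then show ?thesis unfolding sgi sgf by simp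
  qed
qed

definition gam :: "nat \<Rightarrow> nat \<Rightarrow> nat \<Rightarrow> complex" where
  "gam k i j = (if j = flip_bit k i then sg k i else 0)"

lemma gam_sym: "gam k i j = gam k j i"
proof (cases "j = flip_bit k i")
  case True
  then have "i = flip_bit k j" by (simp add: flip_flip)
  moreover have "sg k j = sg k i" using True sg_flip_le[of k k i] by simp
  ultimately show ?thesis using True unfolding gam_def by simp
next
  case False
  then have "i \<noteq> flip_bit k j" using flip_flip by metis
  then show ?thesis using False unfolding gam_def by simp
qed

lemma sum_gam_right:
  assumes "i < 2^m" "k < m"
  shows "(\<Sum>j<2^m. gam k i j * f j) = sg k i * f (flip_bit k i)"
proof -
  have "(\<Sum>j<2^m. gam k i j * f j) = (\<Sum>j<2^m. if j = flip_bit k i then sg k i * f j else 0)"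
    unfolding gam_def by (intro sum.cong) auto
  also have "\<dots> = sg k i * f (flip_bit k i)" using flip_lt[OF assms] by simp
  finally show ?thesis .
qed

lemma cnj_sg: "cnj (sg k i) = sg k i"
  unfolding sg_def by simp

lemma cnj_gam: "cnj (gam k i j) = gam k i j"
  unfolding gam_def by (simp add: cnj_sg)

definition Mt :: "nat \<Rightarrow> (nat \<Rightarrow> real) \<Rightarrow> nat \<Rightarrow> nat \<Rightarrow> complex" where
  "Mt m g i j = (\<Sum>k<m. complex_of_real (g k) * gam k i j)"

lemma Mt_herm: "hermitian_mat d (Mt m g)"
  unfolding hermitian_mat_def Mt_def by (simp add: cnj_sum cnj_gam gam_sym)

lemma gam_pair:
  assumes "k \<noteq> k'"
  shows "sg k i * gam k' (flip_bit k i) l + sg k' i * gam k (flip_bit k' i) l = 0"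
proof (cases "l = flip_bit k' (flip_bit k i)")
  case False
  then have "l \<noteq> flip_bit k (flip_bit k' i)" by (simp add: flip_comm)
  with False show ?thesis unfolding gam_def by simp
next
  case True
  then have T2: "l = flip_bit k (flip_bit k' i)" by (simp add: flip_comm)
  have "sg k i * sg k' (flip_bit k i) + sg k' i * sg k (flip_bit k' i) = 0"
  proof (cases "k < k'")
    case True
    then show ?thesis by (simp add: sg_flip_lt sg_flip_le)
  next
    case False
    then have "k' < k" using assms by simp
    then show ?thesis by (simp add: sg_flip_lt sg_flip_le)
  qed
  then show ?thesis unfolding gam_def using True T2 by simp
qed

lemma sym_double_sum:
  fixes T :: "nat \<Rightarrow> nat \<Rightarrow> complex"
  assumes "\<And>k k'. k < m \<Longrightarrow> k' < m \<Longrightarrow> k \<noteq> k' \<Longrightarrow> T k k' + T k' k = 0"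
  shows "(\<Sum>k<m. \<Sum>k'<m. T k k') = (\<Sum>k<m. T k k)"
proof -
  have "2 * (\<Sum>k<m. \<Sum>k'<m. T k k') = (\<Sum>k<m. \<Sum>k'<m. T k k') + (\<Sum>k'<m. \<Sum>k<m. T k k')"
    by (simp add: sum.swap[of T "{..<m}" "{..<m}"])
  also have "\<dots> = (\<Sum>k<m. \<Sum>k'<m. T k k' + T k' k)"
  proof -
    have "(\<Sum>k'<m. \<Sum>k<m. T k k') = (\<Sum>k<m. \<Sum>k'<m. T k' k)" by simp
    then show ?thesis by (simp add: sum.distrib)
  qed
  also have "\<dots> = (\<Sum>k<m. \<Sum>k'<m. if k' = k then 2 * T k k else 0)"
    using assms by (intro sum.cong refl) auto
  also have "\<dots> = 2 * (\<Sum>k<m. T k k)" by (simp add: sum_distrib_left)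
  finally show ?thesis by simp
qed

lemma Mt_sq:
  assumes i: "i < 2^m" and l: "l < 2^m" and unit: "(\<Sum>k<m. (g k)^2) = 1"
  shows "(\<Sum>j<2^m. Mt m g i j * Mt m g j l) = (if l = i then 1 else 0)"
proof -
  define T where "T k k' = complex_of_real (g k * g k') * (sg k i * gam k' (flip_bit k i) l)" for k k'
  have "(\<Sum>j<2^m. Mt m g i j * Mt m g j l)
      = (\<Sum>j<2^m. \<Sum>k<m. \<Sum>k'<m. complex_of_real (g k * g k') * (gam k i j * gam k' j l))"
    unfolding Mt_def sum_product by (intro sum.cong refl) (simp add: mult_ac)
  also have "\<dots> = (\<Sum>k<m. \<Sum>j<2^m. \<Sum>k'<m. complex_of_real (g k * g k') * (gam k i j * gam k' j l))"
    by (rule sum.swap)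
  also have "\<dots> = (\<Sum>k<m. \<Sum>k'<m. \<Sum>j<2^m. complex_of_real (g k * g k') * (gam k i j * gam k' j l))"
    by (rule sum.cong[OF refl], rule sum.swap)
  also have "\<dots> = (\<Sum>k<m. \<Sum>k'<m. T k k')"
  proof (intro sum.cong refl)
    fix k k' assume k: "k \<in> {..<m}"
    have "(\<Sum>j<2^m. complex_of_real (g k * g k') * (gam k i j * gam k' j l))
        = complex_of_real (g k * g k') * (\<Sum>j<2^m. gam k i j * gam k' j l)"
      by (simp add: sum_distrib_left)
    also have "\<dots> = T k k'" unfolding T_def using sum_gam_right[OF i, of k "\<lambda>j. gam k' j l"] k by simp
    finally show "(\<Sum>j<2^m. complex_of_real (g k * g k') * (gam k i j * gam k' j l)) = T k k'" .
  qed
  also have "\<dots> = (\<Sum>k<m. T k k)"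
  proof (rule sym_double_sum)
    fix k k' :: nat assume "k \<noteq> k'"
    then have "sg k i * gam k' (flip_bit k i) l + sg k' i * gam k (flip_bit k' i) l = 0" by (rule gam_pair)
    moreover have "T k k' + T k' k = complex_of_real (g k * g k') * (sg k i * gam k' (flip_bit k i) l + sg k' i * gam k (flip_bit k' i) l)"
      unfolding T_def by (simp add: distrib_left mult.commute)
    ultimately show "T k k' + T k' k = 0" by simp
  qed
  also have "\<dots> = (\<Sum>k<m. complex_of_real ((g k)^2) * (if l = i then 1 else 0))"
  proof (intro sum.cong refl)
    fix k :: nat
    have "sg k i * gam k (flip_bit k i) l = (if l = i then 1 else 0)"
      unfolding gam_def by (simp add: flip_flip sg_flip_le sg_sq)
    then show "T k k = complex_of_real ((g k)^2) * (if l = i then 1 else 0)"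
      unfolding T_def by (simp add: power2_eq_square)
  qed
  also have "\<dots> = complex_of_real (\<Sum>k<m. (g k)^2) * (if l = i then 1 else 0)"
    by (simp add: sum_distrib_right)
  finally show ?thesis using unit by simp
qed

lemma Mt_obs:
  assumes unit: "(\<Sum>k<m. (g k)^2) = 1"
  shows "observable (2^m) (Mt m g)"
  unfolding observable_def
proof (rule conjI[OF Mt_herm], intro allI impI)
  fix ev assume "is_eigenvalue (2^m) (Mt m g) ev"
  then obtain v where v0: "\<exists>i<2^m. v i \<noteq> 0" and ev: "\<And>i. i < 2^m \<Longrightarrow> (\<Sum>j<2^m. Mt m g i j * v j) = ev * v i"
    unfolding is_eigenvalue_def by blast
  from v0 obtain i0 where i0: "i0 < 2^m" "v i0 \<noteq> 0" by blast
  have "(\<Sum>j<2^m. Mt m g i0 j * (\<Sum>l<2^m. Mt m g j l * v l)) = (\<Sum>j<2^m. Mt m g i0 j * (ev * v j))"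
    using ev by (intro sum.cong refl) simp
  also have "\<dots> = ev * (\<Sum>j<2^m. Mt m g i0 j * v j)" by (simp add: sum_distrib_left mult_ac)
  also have "\<dots> = ev * ev * v i0" using ev[OF i0(1)] by simp
  finally have e1: "(\<Sum>j<2^m. Mt m g i0 j * (\<Sum>l<2^m. Mt m g j l * v l)) = ev * ev * v i0" .
  have "(\<Sum>j<2^m. Mt m g i0 j * (\<Sum>l<2^m. Mt m g j l * v l)) = (\<Sum>l<2^m. (\<Sum>j<2^m. Mt m g i0 j * Mt m g j l) * v l)"
  proof -
    have "(\<Sum>j<2^m. Mt m g i0 j * (\<Sum>l<2^m. Mt m g j l * v l)) = (\<Sum>j<2^m. \<Sum>l<2^m. Mt m g i0 j * Mt m g j l * v l)"
      by (simp add: sum_distrib_left mult.assoc)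
    also have "\<dots> = (\<Sum>l<2^m. \<Sum>j<2^m. Mt m g i0 j * Mt m g j l * v l)" by (rule sum.swap)
    also have "\<dots> = (\<Sum>l<2^m. (\<Sum>j<2^m. Mt m g i0 j * Mt m g j l) * v l)" by (simp add: sum_distrib_right)
    finally show ?thesis .
  qed
  also have "\<dots> = (\<Sum>l<2^m. (if l = i0 then 1 else 0) * v l)"
    using Mt_sq[OF i0(1) _ unit] by (intro sum.cong refl) simp
  also have "\<dots> = (\<Sum>l<2^m. if l = i0 then v l else 0)" by (intro sum.cong) auto
  also have "\<dots> = v i0" using i0 by simp
  finally have "ev * ev * v i0 = 1 * v i0" using e1 by simp
  then have "ev * ev = 1" using i0(2) mult_cancel_right by blast
  then have "ev = 1 \<or> ev = -1" by (metis power2_eq_square power2_eq_1_iff)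
  then show "ev \<in> \<real> \<and> -1 \<le> Re ev \<and> Re ev \<le> 1" by auto
qed

lemma Mt_corr:
  "(\<Sum>a<2^m. \<Sum>a'<2^m. Mt m g a a' * Mt m h a a') = of_nat (2^m) * complex_of_real (\<Sum>k<m. g k * h k)"
proof -
  have inner: "(\<Sum>a'<2^m. gam k a a' * gam k' a a') = (if k = k' then 1 else 0)"
    if a: "a < 2^m" and k: "k < m" and k': "k' < m" for a k k'
  proof -
    have "(\<Sum>a'<2^m. gam k a a' * gam k' a a') = sg k a * gam k' a (flip_bit k a)"
      by (rule sum_gam_right[OF a k])
    also have "\<dots> = (if k = k' then 1 else 0)"
      using flip_ne[of k k' a] unfolding gam_def by (auto simp: sg_sq)
    finally show ?thesis .
  qed
  have "(\<Sum>a<2^m. \<Sum>a'<2^m. Mt m g a a' * Mt m h a a')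
      = (\<Sum>a<2^m. \<Sum>a'<2^m. \<Sum>k<m. \<Sum>k'<m. complex_of_real (g k * h k') * (gam k a a' * gam k' a a'))"
    unfolding Mt_def sum_product by (intro sum.cong refl) (simp add: mult_ac)
  also have "\<dots> = (\<Sum>a<2^m. \<Sum>k<m. \<Sum>a'<2^m. \<Sum>k'<m. complex_of_real (g k * h k') * (gam k a a' * gam k' a a'))"
    by (rule sum.cong[OF refl], rule sum.swap)
  also have "\<dots> = (\<Sum>a<2^m. \<Sum>k<m. \<Sum>k'<m. \<Sum>a'<2^m. complex_of_real (g k * h k') * (gam k a a' * gam k' a a'))"
    by (rule sum.cong[OF refl], rule sum.cong[OF refl], rule sum.swap)
  also have "\<dots> = (\<Sum>a<(2::nat)^m. \<Sum>k<m. \<Sum>k'<m. if k' = k then complex_of_real (g k * h k) else 0)"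
  proof (intro sum.cong refl)
    fix a k k' :: nat assume "a \<in> {..<2^m}" "k \<in> {..<m}" "k' \<in> {..<m}"
    then show "(\<Sum>a'<2^m. complex_of_real (g k * h k') * (gam k a a' * gam k' a a')) = (if k' = k then complex_of_real (g k * h k) else 0)"
      using inner[of a k k'] by (auto simp: sum_distrib_left[symmetric])
  qed
  also have "\<dots> = (\<Sum>a<(2::nat)^m. complex_of_real (\<Sum>k<m. g k * h k))" by simp
  also have "\<dots> = of_nat (2^m) * complex_of_real (\<Sum>k<m. g k * h k)" by simp
  finally show ?thesis .
qed

definition me :: "nat \<Rightarrow> nat \<Rightarrow> nat \<Rightarrow> complex" where
  "me D p q = (if p div D = p mod D \<and> q div D = q mod D then 1 / of_nat D else 0)"

lemma me_tr: assumes "D \<ge> 1" shows "trace_mat (D*D) (me D) = 1"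
proof -
  have "trace_mat (D*D) (me D) = (\<Sum>a<D. \<Sum>b<D. if a = b then 1 / of_nat D else 0)"
    unfolding trace_mat_def me_def sum_pair by (intro sum.cong refl) auto
  also have "\<dots> = (\<Sum>a<D. 1 / (of_nat D :: complex))" by simp
  also have "\<dots> = 1" using assms by simp
  finally show ?thesis .
qed

lemma me_psd: assumes "D \<ge> 1" shows "psd_mat (D*D) (me D)"
  unfolding psd_mat_def
proof (intro conjI allI)
  show "hermitian_mat (D*D) (me D)" unfolding hermitian_mat_def me_def by simp
  fix v :: "nat \<Rightarrow> complex"
  define c where "c p = (if p div D = p mod D then 1 else 0 :: complex)" for p
  define S where "S = (\<Sum>q<D*D. c q * v q)"
  have cc: "cnj (c p) = c p" for p by (simp add: c_def)
  have "(\<Sum>i<D*D. \<Sum>j<D*D. cnj (v i) * me D i j * v j) = (\<Sum>i<D*D. \<Sum>j<D*D. (cnj (v i) * c i) * (c j * v j) / of_nat D)"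
    unfolding me_def c_def by (intro sum.cong refl) auto
  also have "\<dots> = (\<Sum>i<D*D. \<Sum>j<D*D. (cnj (v i) * c i) * (c j * v j)) / of_nat D"
    by (simp add: sum_divide_distrib)
  also have "(\<Sum>i<D*D. \<Sum>j<D*D. (cnj (v i) * c i) * (c j * v j)) = cnj S * S"
    unfolding S_def sum_product[symmetric] by (simp add: cnj_sum cc mult.commute)
  also have "cnj S * S / of_nat D = complex_of_real ((cmod S)^2 / real D)"
  proof -
    have "cnj S * S = complex_of_real ((cmod S)^2)" by (metis complex_norm_square mult.commute of_real_power)
    then show ?thesis by simp
  qed
  finally have e: "(\<Sum>i<D*D. \<Sum>j<D*D. cnj (v i) * me D i j * v j) = complex_of_real ((cmod S)^2 / real D)" .
  show "let q = \<Sum>i<D*D. \<Sum>j<D*D. cnj (v i) * me D i j * v j in q \<in> \<real> \<and> 0 \<le> Re q"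
    unfolding Let_def e by simp
qed

lemma me_corr:
  assumes D: "D \<ge> 1"
  shows "trace_mat (D*D) (mat_mult (D*D) (kron D A B) (me D)) = (\<Sum>a<D. \<Sum>a'<D. A a a' * B a a') / of_nat D"
proof -
  have "trace_mat (D*D) (mat_mult (D*D) (kron D A B) (me D))
     = (\<Sum>a<D. \<Sum>b<D. \<Sum>a'<D. \<Sum>b'<D. A a a' * B b b' * (if a' = b' \<and> a = b then 1 / of_nat D else 0))"
    unfolding trace_mat_def mat_mult_def sum_pair kron_def me_def by (intro sum.cong refl) auto
  also have "\<dots> = (\<Sum>a<D. \<Sum>b<D. if b = a then (\<Sum>a'<D. A a a' * B a a' / of_nat D) else 0)"
  proof (intro sum.cong refl)
    fix a b assume "a \<in> {..<D}" "b \<in> {..<D}"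
    have "(\<Sum>a'<D. \<Sum>b'<D. A a a' * B b b' * (if a' = b' \<and> a = b then 1 / of_nat D else 0))
        = (\<Sum>a'<D. \<Sum>b'<D. if b' = a' then (if b = a then A a a' * B a a' / of_nat D else 0) else 0)"
      by (intro sum.cong refl) auto
    also have "\<dots> = (if b = a then (\<Sum>a'<D. A a a' * B a a' / of_nat D) else 0)" by simp
    finally show "(\<Sum>a'<D. \<Sum>b'<D. A a a' * B b b' * (if a' = b' \<and> a = b then 1 / of_nat D else 0))
        = (if b = a then (\<Sum>a'<D. A a a' * B a a' / of_nat D) else 0)" .
  qed
  also have "\<dots> = (\<Sum>a<D. \<Sum>a'<D. A a a' * B a a' / of_nat D)" by simp
  also have "\<dots> = (\<Sum>a<D. \<Sum>a'<D. A a a' * B a a') / of_nat D" by (simp add: sum_divide_distrib)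
  finally show ?thesis .
qed

lemma gram_in_Cor:
  fixes X :: "real^'n^'n" and g :: "'n \<Rightarrow> nat \<Rightarrow> real"
  assumes bnd: "\<And>x y. -1 \<le> X$x$y \<and> X$x$y \<le> 1"
    and gx: "\<And>x y. X$x$y = (\<Sum>k<m. g x k * g y k)"
    and unit: "\<And>x. (\<Sum>k<m. (g x k)^2) = 1"
  shows "X \<in> Cor"
proof -
  define D :: nat where "D = 2^m"
  have D1: "D \<ge> 1" unfolding D_def by simp
  have obs: "\<forall>x. observable D (Mt m (g x))" unfolding D_def using Mt_obs unit by blast
  have corr: "\<forall>x y. complex_of_real (X $ x $ y) = trace_mat (D*D) (mat_mult (D*D) (kron D (Mt m (g x)) (Mt m (g y))) (me D))"
  proof (intro allI)
    fix x y
    have "trace_mat (D*D) (mat_mult (D*D) (kron D (Mt m (g x)) (Mt m (g y))) (me D))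
        = (\<Sum>a<D. \<Sum>a'<D. Mt m (g x) a a' * Mt m (g y) a a') / of_nat D"
      by (rule me_corr[OF D1])
    also have "\<dots> = of_nat D * complex_of_real (\<Sum>k<m. g x k * g y k) / of_nat D"
      unfolding D_def by (simp only: Mt_corr)
    also have "\<dots> = complex_of_real (X $ x $ y)" using D1 gx[of x y] by simp
    finally show "complex_of_real (X $ x $ y) = trace_mat (D*D) (mat_mult (D*D) (kron D (Mt m (g x)) (Mt m (g y))) (me D))" by simp
  qed
  have W: "D \<ge> 1 \<and> (\<forall>x. observable D (Mt m (g x))) \<and> (\<forall>y. observable D (Mt m (g y))) \<and>
        psd_mat (D*D) (me D) \<and> trace_mat (D*D) (me D) = 1 \<and>
        (\<forall>x y. complex_of_real (X $ x $ y) = trace_mat (D*D) (mat_mult (D*D) (kron D (Mt m (g x)) (Mt m (g y))) (me D)))"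
    using D1 obs me_psd[OF D1] me_tr[OF D1] corr by blast
  show ?thesis unfolding Cor_def mem_Collect_eq
    apply (rule conjI)
     apply (use bnd in blast)
    apply (rule exI[of _ D], rule exI[of _ "\<lambda>x. Mt m (g x)"], rule exI[of _ "\<lambda>x. Mt m (g x)"], rule exI[of _ "me D"])
    using W by blast
qed

lemma sum_two_delta:
  fixes f :: "'n::finite \<Rightarrow> real"
  assumes "x \<noteq> y"
  shows "(\<Sum>j\<in>UNIV. f j * ((if j = x then 1 else 0) + s * (if j = y then 1 else 0))) = f x + s * f y"
proof -
  have "(\<Sum>j\<in>UNIV. f j * ((if j = x then 1 else 0) + s * (if j = y then 1 else 0)))
      = (\<Sum>j\<in>UNIV. (if j = x then f j else 0) + (if j = y then s * f j else 0))"
    using assms by (intro sum.cong) auto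
  also have "\<dots> = f x + s * f y" by (simp add: sum.distrib)
  finally show ?thesis .
qed

lemma ell_bounds:
  fixes X :: "real^'n^'n"
  assumes E: "X \<in> elliptope"
  shows "-1 \<le> X$x$y \<and> X$x$y \<le> 1"
proof (cases "x = y")
  case True
  then show ?thesis using E unfolding elliptope_def by simp
next
  case False
  have tr: "transpose X = X" and ps: "\<And>v. 0 \<le> v \<bullet> (X *v v)" and dg: "\<And>i. X$i$i = 1"
    using E unfolding elliptope_def by auto
  have sym: "X$y$x = X$x$y" using tr by (metis transpose_def vec_lambda_beta)
  have q: "0 \<le> 2 + 2 * s * X$x$y" if s: "s * s = 1" for s :: real
  proof -
    define v :: "real^'n" where "v = (\<chi> i. (if i = x then 1 else 0) + s * (if i = y then 1 else 0))"
    have Xv: "(X *v v) $ i = X$i$x + s * X$i$y" for i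
      unfolding matrix_vector_mult_def v_def using sum_two_delta[OF False, of "\<lambda>j. X$i$j" s] by simp
    have "v \<bullet> (X *v v) = (\<Sum>i\<in>UNIV. (X$i$x + s * X$i$y) * ((if i = x then 1 else 0) + s * (if i = y then 1 else 0)))"
    proof -
      have vi: "v $ i = (if i = x then 1 else 0) + s * (if i = y then 1 else 0)" for i by (simp add: v_def)
      show ?thesis unfolding inner_vec_def Xv by (simp add: vi mult.commute)
    qed
    also have "\<dots> = (X$x$x + s * X$x$y) + s * (X$y$x + s * X$y$y)"
      by (rule sum_two_delta[OF False])
    also have "\<dots> = 2 + 2 * s * X$x$y" using dg sym s by (simp add: algebra_simps)
    finally show ?thesis using ps[of v] by simp
  qed
  from q[of 1] q[of "-1"] show ?thesis by simp
qed

lemma quad_sum: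
  fixes X :: "real^'n^'n" and a :: "real^'n"
  shows "a \<bullet> (X *v a) = (\<Sum>x\<in>UNIV. \<Sum>y\<in>UNIV. X$x$y * (a$x * a$y))"
  unfolding inner_vec_def matrix_vector_mult_def by (simp add: sum_distrib_left mult_ac)

lemma ell_gram:
  fixes X :: "real^'n^'n"
  assumes E: "X \<in> elliptope"
  shows "\<exists>(m::nat) (g :: 'n \<Rightarrow> nat \<Rightarrow> real). \<forall>x y. X$x$y = (\<Sum>k<m. g x k * g y k)"
proof -
  have tr: "transpose X = X" and ps: "\<And>v. 0 \<le> v \<bullet> (X *v v)"
    using E unfolding elliptope_def by auto
  have sym: "X$y$x = X$x$y" for x y using tr by (metis transpose_def vec_lambda_beta)
  define R where "R x y = complex_of_real (X$x$y)" for x y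
  have herm: "\<forall>i\<in>UNIV. \<forall>j\<in>UNIV. R i j = cnj (R j i)" unfolding R_def using sym by simp
  have pos: "\<forall>v. 0 \<le> Re (bf UNIV R v v)"
  proof
    fix v :: "'n \<Rightarrow> complex"
    define a :: "real^'n" where "a = (\<chi> x. Re (v x))"
    define b :: "real^'n" where "b = (\<chi> x. Im (v x))"
    have "Re (bf UNIV R v v) = (\<Sum>x\<in>UNIV. \<Sum>y\<in>UNIV. X$x$y * (a$x * a$y) + X$x$y * (b$x * b$y))"
      unfolding bf_def R_def a_def b_def by (simp add: Re_sum algebra_simps)
    also have "\<dots> = a \<bullet> (X *v a) + b \<bullet> (X *v b)"
      unfolding quad_sum by (simp add: sum.distrib)
    finally show "0 \<le> Re (bf UNIV R v v)" using ps[of a] ps[of b] by simp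
  qed
  obtain G :: "'n \<Rightarrow> 'n \<Rightarrow> complex" where G: "\<forall>i\<in>UNIV. \<forall>j\<in>UNIV. R i j = (\<Sum>k\<in>UNIV. G i k * cnj (G j k))"
  proof -
    have "finite (UNIV :: 'n set)" by simp
    from cholesky[OF this herm pos] show ?thesis using that by blast
  qed
  define r where "r x p = (if snd p then Im (G x (fst p)) else Re (G x (fst p)))" for x and p :: "'n \<times> bool"
  have Xr: "X$x$y = (\<Sum>p\<in>UNIV. r x p * r y p)" for x y
  proof -
    have "X$x$y = Re (R x y)" unfolding R_def by simp
    also have "\<dots> = (\<Sum>k\<in>UNIV. Re (G x k) * Re (G y k) + Im (G x k) * Im (G y k))"
      using G by (simp add: Re_sum)
    also have "\<dots> = (\<Sum>k\<in>UNIV. \<Sum>c\<in>UNIV. r x (k, c) * r y (k, c))"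
      unfolding r_def by (simp add: UNIV_bool add.commute)
    also have "\<dots> = (\<Sum>p\<in>UNIV. r x p * r y p)"
      by (simp add: sum.cartesian_product UNIV_Times_UNIV[symmetric] del: UNIV_Times_UNIV)
    finally show ?thesis .
  qed
  obtain h where h: "bij_betw h {0..<card (UNIV :: ('n \<times> bool) set)} (UNIV :: ('n \<times> bool) set)"
  proof -
    have "finite (UNIV :: ('n \<times> bool) set)" by simp
    then show ?thesis using ex_bij_betw_nat_finite that by blast
  qed
  define m where "m = card (UNIV :: ('n \<times> bool) set)"
  have "X$x$y = (\<Sum>k<m. r x (h k) * r y (h k))" for x y
    unfolding Xr m_def lessThan_atLeast0 by (rule sum.reindex_bij_betw[OF h, symmetric])
  then show ?thesis by (intro exI[of _ m] exI[of _ "\<lambda>x k. r x (h k)"]) simp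
qed



lemma ell_Cor:
  fixes X :: "real^'n^'n"
  assumes E: "X \<in> elliptope"
  shows "X \<in> Cor"
proof -
  obtain m and g :: "'n \<Rightarrow> nat \<Rightarrow> real" where g: "\<forall>x y. X$x$y = (\<Sum>k<m. g x k * g y k)"
    using ell_gram[OF E] by blast
  have dg: "X$x$x = 1" for x using E unfolding elliptope_def by simp
  have unit: "(\<Sum>k<m. (g x k)^2) = 1" for x
    using g dg[of x] by (simp add: power2_eq_square)
  show ?thesis
    by (rule gram_in_Cor[where m=m and g=g]) (use ell_bounds[OF E] g unit in auto)
qed

lemma contr_all: "d \<ge> 1 \<Longrightarrow> observable d M \<Longrightarrow> contr d M"
  unfolding contr_def using obs_contraction unfolding nrm_def mvec_def by blast

lemma Cor_bounds: "C \<in> Cor \<Longrightarrow> C $ x $ y \<le> 1"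
  unfolding Cor_def by simp

theorem proposition5p10:
  fixes X :: "real^'n^'n"
  assumes "X extreme_point_of elliptope"
  shows "X extreme_point_of Cor"
proof -
  have XE: "X \<in> elliptope" and ext: "\<And>a b. a \<in> elliptope \<Longrightarrow> b \<in> elliptope \<Longrightarrow> X \<notin> open_segment a b"
    using assms unfolding extreme_point_of_def by auto
  have dg: "X$i$i = 1" for i using XE unfolding elliptope_def by simp
  show ?thesis unfolding extreme_point_of_def
  proof (intro conjI ballI)
    show "X \<in> Cor" by (rule ell_Cor[OF XE])
    fix a b :: "real^'n^'n" assume aC: "a \<in> Cor" and bC: "b \<in> Cor"
    show "X \<notin> open_segment a b"
    proof
      assume seg: "X \<in> open_segment a b"
      then obtain u where u: "0 < u" "u < 1" and Xe: "X = (1 - u) *\<^sub>R a + u *\<^sub>R b"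
        by (auto simp: in_segment)
      have diag_ab: "a$i$i = 1 \<and> b$i$i = 1" for i
      proof -
        have "X$i$i = (1 - u) * a$i$i + u * b$i$i" unfolding Xe by simp
        then have e: "(1 - u) * a$i$i + u * b$i$i = 1" using dg by simp
        have "a$i$i \<le> 1" "b$i$i \<le> 1" using Cor_bounds[OF aC] Cor_bounds[OF bC] by auto
        then have h1: "(1 - u) * (1 - a$i$i) \<ge> 0" and h2: "u * (1 - b$i$i) \<ge> 0" using u by simp_all
        have s0: "(1 - u) * (1 - a$i$i) + u * (1 - b$i$i) = 0" using e by (simp add: algebra_simps)
        then have z1: "(1 - u) * (1 - a$i$i) = 0" and z2: "u * (1 - b$i$i) = 0" using h1 h2 by linarith+
        then show ?thesis using u by simp
      qed
      have aE: "a \<in> elliptope" by (rule cor_diag_elliptope[OF aC]) (use diag_ab in simp, rule contr_all)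
      have bE: "b \<in> elliptope" by (rule cor_diag_elliptope[OF bC]) (use diag_ab in simp, rule contr_all)
      show False using ext[OF aE bE] seg by simp
    qed
  qed
qed

end
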